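(* Let $\mathcal{A}\subset\mathcal{P}[n]$, let $G$ be the induced subgraph of $Q_n$ on vertex set $\mathcal{A}$, and let $i\in\{1,\dots,n\}$. Suppose $G$ has average degree at least $d$ and any two vertices of $G$ are at Hamming distance less than $k$. Then the induced subgraph $G'$ of $Q_n$ on vertex set $C_i(\mathcal{A})$ also has average degree at least $d$ and any two of its vertices are at Hamming distance less than $k$.
   Context: Vertices of $Q_n$ are identified with subsets of $[n]=\{1,\dots,n\}$ (elements of the power set $\mathcal{P}[n]$); two sets are adjacent iff their symmetric difference has size one, and the Hamming distance of $A,B$ is $|A\triangle B|$. For $A\in\mathcal{P}[n]$, $C_i(A)=A\setminus\{i\}$ if $i\in A$ and $C_i(A)=A$ if $i\notin A$. For $\mathcal{A}\subset\mathcal{P}[n]$, the down-compression is $C_i(\mathcal{A})=\{C_i(A):A\in\mathcal{A}\}\cup\{A\in\mathcal{A}:C_i(A)\in\mathcal{A}\}$. Average degree is $2|E|/|V|$. *)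

theory Defs
  imports Complex_Main
begin

text \<open>Vertices of Q_n are subsets of {1..n}; Hamming distance is the size of the symmetric difference.\<close>

definition hamming :: "nat set \<Rightarrow> nat set \<Rightarrow> nat" where
  "hamming A B = card ((A - B) \<union> (B - A))"

definition cube_edges :: "nat set set \<Rightarrow> nat set set set" where
  "cube_edges F = {{A, B} | A B. A \<in> F \<and> B \<in> F \<and> hamming A B = 1}"

text \<open>Average degree 2|E|/|V| (0 for the empty vertex set, by HOL's x/0 = 0).\<close>
definition avg_degree :: "nat set set \<Rightarrow> real" where
  "avg_degree F = 2 * real (card (cube_edges F)) / real (card F)"

definition comp_set :: "nat \<Rightarrow> nat set \<Rightarrow> nat set" where
  "comp_set i A = (if i \<in> A then A - {i} else A)"

definition down_comp :: "nat \<Rightarrow> nat set set \<Rightarrow> nat set set" where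
  "down_comp i F = {comp_set i A | A. A \<in> F} \<union> {A \<in> F. comp_set i A \<in> F}"

end

theory Submission
  imports Defs
begin

lemma ham_sym: "hamming A B = hamming B A"
  unfolding hamming_def by (simp add: Un_commute)

lemma ham_del: "finite X \<Longrightarrow> finite Y \<Longrightarrow> hamming (X - {i}) (Y - {i}) \<le> hamming X Y"
  unfolding hamming_def by (rule card_mono) auto

lemma ham_del_eq: "i \<in> X \<Longrightarrow> i \<in> Y \<Longrightarrow> hamming (X - {i}) (Y - {i}) = hamming X Y"
proof -
  assume a: "i \<in> X" "i \<in> Y"
  have e: "((X - {i}) - (Y - {i})) \<union> ((Y - {i}) - (X - {i})) = (X - Y) \<union> (Y - X)" using a by auto
  show ?thesis unfolding hamming_def e ..
qed

lemma ham_swap: "i \<in> X \<Longrightarrow> i \<notin> Y \<Longrightarrow> hamming (X - {i}) (insert i Y) = hamming X Y"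
proof -
  assume a: "i \<in> X" "i \<notin> Y"
  have e: "((X - {i}) - insert i Y) \<union> (insert i Y - (X - {i})) = (X - Y) \<union> (Y - X)" using a by auto
  show ?thesis unfolding hamming_def e ..
qed

lemma ham_one: assumes "finite X" "finite Y" "hamming X Y = 1" "i \<in> X" "i \<notin> Y"
  shows "Y = X - {i}"
proof -
  let ?S = "(X - Y) \<union> (Y - X)"
  have i: "i \<in> ?S" using assms by auto
  have "card ?S = 1" using assms(3) unfolding hamming_def .
  then obtain x where x: "?S = {x}" by (rule card_1_singletonE)
  with i have "?S = {i}" by simp
  thus ?thesis using assms by auto
qed

lemma edges_sub: "e \<in> cube_edges F \<Longrightarrow> e \<subseteq> F"
  unfolding cube_edges_def by auto

lemma dc_char: "X \<in> down_comp i F \<longleftrightarrow> (X \<in> F \<and> (i \<in> X \<longrightarrow> X - {i} \<in> F)) \<or> (i \<notin> X \<and> insert i X \<in> F)"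
proof
  assume "X \<in> down_comp i F"
  then show "(X \<in> F \<and> (i \<in> X \<longrightarrow> X - {i} \<in> F)) \<or> (i \<notin> X \<and> insert i X \<in> F)"
    unfolding down_comp_def comp_set_def by (auto simp: insert_absorb split: if_splits)
next
  assume a: "(X \<in> F \<and> (i \<in> X \<longrightarrow> X - {i} \<in> F)) \<or> (i \<notin> X \<and> insert i X \<in> F)"
  show "X \<in> down_comp i F"
  proof (cases "X \<in> F \<and> (i \<in> X \<longrightarrow> X - {i} \<in> F)")
    case True
    then show ?thesis unfolding down_comp_def comp_set_def by (cases "i \<in> X") auto
  next
    case False
    then have "i \<notin> X" "insert i X \<in> F" using a by auto
    then have "X = comp_set i (insert i X)" unfolding comp_set_def by auto
    then show ?thesis unfolding down_comp_def using \<open>insert i X \<in> F\<close> by blast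
  qed
qed

lemma comp_in: "A \<in> F \<Longrightarrow> comp_set i A \<in> down_comp i F"
  unfolding down_comp_def by blast


theorem lemma6:
  fixes n i k :: nat and d :: real and \<A> :: "nat set set"
  assumes "\<A> \<subseteq> Pow {1..n}"
    and "i \<in> {1..n}"
    and "avg_degree \<A> \<ge> d"
    and "\<forall>A\<in>\<A>. \<forall>B\<in>\<A>. hamming A B < k"
  shows "avg_degree (down_comp i \<A>) \<ge> d \<and> (\<forall>A\<in>down_comp i \<A>. \<forall>B\<in>down_comp i \<A>. hamming A B < k)"
proof -
  let ?D = "down_comp i \<A>"
  have finA: "\<And>X. X \<in> \<A> \<Longrightarrow> finite X" using assms(1) finite_subset by blast
  have DP: "?D \<subseteq> Pow {1..n}"
  proof
    fix X assume "X \<in> ?D"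
    then have "X \<in> \<A> \<or> insert i X \<in> \<A>" unfolding dc_char by blast
    then show "X \<in> Pow {1..n}" using assms(1) by blast
  qed
  have finD: "finite ?D" using DP finite_subset by blast
  have finDe: "\<And>X. X \<in> ?D \<Longrightarrow> finite X" using DP finite_subset by blast
  have finAA: "finite \<A>" using assms(1) finite_subset by blast
  have dist: "\<forall>A\<in>?D. \<forall>B\<in>?D. hamming A B < k"
  proof (intro ballI)
    have key: "hamming X Y < k" if X: "X \<in> ?D" and Y: "Y \<in> ?D" and iX: "i \<in> X" for X Y
    proof (cases "i \<in> Y")
      case True
      then show ?thesis using X Y iX assms(4) unfolding dc_char by blast
    next
      case False
      have XA: "X \<in> \<A>" "X - {i} \<in> \<A>" using X iX unfolding dc_char by auto
      show ?thesis
      proof (cases "Y \<in> \<A>")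
        case True then show ?thesis using XA assms(4) by blast
      next
        case no: False
        then have "insert i Y \<in> \<A>" using Y unfolding dc_char by blast
        then show ?thesis using XA assms(4) ham_swap[OF iX False] by metis
      qed
    qed
    fix X Y assume X: "X \<in> ?D" and Y: "Y \<in> ?D"
    show "hamming X Y < k"
    proof (cases "i \<in> X \<or> i \<in> Y")
      case True
      then show ?thesis using key X Y ham_sym by metis
    next
      case False
      obtain X0 where X0: "X0 \<in> \<A>" "X = X0 - {i}"
        using X False unfolding dc_char by (metis Diff_insert_absorb Diff_empty Diff_insert0)
      obtain Y0 where Y0: "Y0 \<in> \<A>" "Y = Y0 - {i}"
        using Y False unfolding dc_char by (metis Diff_insert_absorb Diff_empty Diff_insert0)
      have "hamming X Y \<le> hamming X0 Y0" using X0 Y0 ham_del finA by metis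
      then show ?thesis using X0 Y0 assms(4) by fastforce
    qed
  qed
  define psi where "psi X = (if X \<in> \<A> then X else insert i X)" for X
  have psi_inj: "inj_on psi ?D"
  proof (rule inj_onI)
    fix X Y assume X: "X \<in> ?D" and Y: "Y \<in> ?D" and e: "psi X = psi Y"
    show "X = Y"
    proof (cases "X \<in> \<A>"; cases "Y \<in> \<A>")
      assume "X \<in> \<A>" "Y \<in> \<A>" then show ?thesis using e psi_def by simp
    next
      assume a: "X \<in> \<A>" "Y \<notin> \<A>"
      then have "i \<notin> Y" "X = insert i Y" using e Y psi_def unfolding dc_char by auto
      then have "X - {i} = Y" by auto
      then show ?thesis using a X unfolding dc_char by auto
    next
      assume a: "X \<notin> \<A>" "Y \<in> \<A>"
      then have "i \<notin> X" "Y = insert i X" using e X psi_def unfolding dc_char by auto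
      then have "Y - {i} = X" by auto
      then show ?thesis using a Y unfolding dc_char by auto
    next
      assume a: "X \<notin> \<A>" "Y \<notin> \<A>"
      then have "i \<notin> X" "i \<notin> Y" "insert i X = insert i Y" using e X Y psi_def unfolding dc_char by auto
      then show ?thesis by (metis Diff_insert_absorb)
    qed
  qed
  have psi_into: "psi ` ?D \<subseteq> \<A>"
  proof
    fix Y assume "Y \<in> psi ` ?D"
    then obtain X where X: "X \<in> ?D" "Y = psi X" by blast
    then show "Y \<in> \<A>" using dc_char[of X i \<A>] psi_def by auto
  qed
  have cardD: "card ?D \<le> card \<A>"
    using card_inj_on_le[OF psi_inj psi_into finAA] .
  have neD: "\<A> \<noteq> {} \<Longrightarrow> card ?D > 0"
    using comp_in finD by (metis card_gt_0_iff empty_iff ex_in_conv)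
  have moved: "(\<forall>x\<in>e. i \<in> x) \<and> (\<exists>x\<in>e. x - {i} \<notin> \<A>) \<and> comp_set i ` e \<in> cube_edges ?D"
    if e: "e \<in> cube_edges \<A>" and ne: "e \<notin> cube_edges ?D" for e
  proof -
    obtain A B where AB: "e = {A, B}" "A \<in> \<A>" "B \<in> \<A>" "hamming A B = 1"
      using e unfolding cube_edges_def by blast
    have gen: "i \<in> P \<and> i \<in> Q \<and> P - {i} \<notin> \<A>"
      if P: "P \<in> \<A>" "P \<notin> ?D" and Q: "Q \<in> \<A>" and h: "hamming P Q = 1" for P Q
    proof -
      have iP: "i \<in> P" "P - {i} \<notin> \<A>" using P unfolding dc_char by auto
      have "i \<in> Q"
      proof (rule ccontr)
        assume "i \<notin> Q"
        then have "Q = P - {i}" using ham_one finA P Q h iP by blast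
        then show False using Q iP by simp
      qed
      then show ?thesis using iP by simp
    qed
    have "A \<notin> ?D \<or> B \<notin> ?D" using ne AB unfolding cube_edges_def by blast
    then have c: "i \<in> A \<and> i \<in> B \<and> (A - {i} \<notin> \<A> \<or> B - {i} \<notin> \<A>)"
      using gen AB ham_sym by metis
    have im: "comp_set i ` e = {A - {i}, B - {i}}" using AB c unfolding comp_set_def by auto
    have "A - {i} \<in> ?D" "B - {i} \<in> ?D" using comp_in AB c unfolding comp_set_def by (metis)+
    moreover have "hamming (A - {i}) (B - {i}) = 1" using ham_del_eq c AB by metis
    ultimately have "comp_set i ` e \<in> cube_edges ?D" unfolding im cube_edges_def by blast
    then show ?thesis using AB c by auto
  qed
  define phi where "phi e = (if e \<in> cube_edges ?D then e else comp_set i ` e)" for e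
  have phi_into: "phi ` cube_edges \<A> \<subseteq> cube_edges ?D"
    using moved phi_def by auto
  have phi_inj: "inj_on phi (cube_edges \<A>)"
  proof (rule inj_onI)
    fix e1 e2 assume e1: "e1 \<in> cube_edges \<A>" and e2: "e2 \<in> cube_edges \<A>" and eq: "phi e1 = phi e2"
    have inj: "inj_on (comp_set i) {x. i \<in> x}"
    proof (rule inj_onI)
      fix x y assume "x \<in> {x. i \<in> x}" "y \<in> {x. i \<in> x}" "comp_set i x = comp_set i y"
      then have "i \<in> x" "i \<in> y" "x - {i} = y - {i}" by (auto simp: comp_set_def)
      then show "x = y" by (metis insert_Diff)
    qed
    have cross: False if a: "e \<in> cube_edges \<A>" "e \<in> cube_edges ?D" "f \<in> cube_edges \<A>" "f \<notin> cube_edges ?D"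
      "e = comp_set i ` f" for e f
    proof -
      obtain x where x: "x \<in> f" "x - {i} \<notin> \<A>" "i \<in> x" using moved[OF a(3,4)] by blast
      have "comp_set i x \<in> e" using a(5) x by blast
      moreover have "comp_set i x = x - {i}" using x comp_set_def by simp
      ultimately show False using edges_sub[OF a(1)] x by auto
    qed
    show "e1 = e2"
    proof (cases "e1 \<in> cube_edges ?D"; cases "e2 \<in> cube_edges ?D")
      assume "e1 \<in> cube_edges ?D" "e2 \<in> cube_edges ?D" then show ?thesis using eq phi_def by simp
    next
      assume a: "e1 \<in> cube_edges ?D" "e2 \<notin> cube_edges ?D"
      then have "e1 = comp_set i ` e2" using eq phi_def by simp
      from cross[OF e1 a(1) e2 a(2) this] show ?thesis by (rule FalseE)
    next
      assume a: "e1 \<notin> cube_edges ?D" "e2 \<in> cube_edges ?D"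
      then have "e2 = comp_set i ` e1" using eq phi_def by simp
      from cross[OF e2 a(2) e1 a(1) this] show ?thesis by (rule FalseE)
    next
      assume n: "e1 \<notin> cube_edges ?D" "e2 \<notin> cube_edges ?D"
      then have "comp_set i ` e1 = comp_set i ` e2" using eq phi_def by simp
      moreover have "e1 \<subseteq> {x. i \<in> x}" using conjunct1[OF moved[OF e1 n(1)]] by auto
      moreover have "e2 \<subseteq> {x. i \<in> x}" using conjunct1[OF moved[OF e2 n(2)]] by auto
      ultimately show ?thesis by (simp add: inj_on_image_eq_iff[OF inj])
    qed
  qed
  have finE: "finite (cube_edges ?D)"
  proof (rule finite_subset[of _ "Pow ?D"])
    show "cube_edges ?D \<subseteq> Pow ?D" using edges_sub by blast
    show "finite (Pow ?D)" using finD by simp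
  qed
  have cardE: "card (cube_edges \<A>) \<le> card (cube_edges ?D)"
    using card_inj_on_le[OF phi_inj phi_into finE] .
  have avg: "avg_degree \<A> \<le> avg_degree ?D"
  proof (cases "\<A> = {}")
    case True
    then have "?D = {}" unfolding down_comp_def by auto
    then show ?thesis using True by simp
  next
    case False
    then have p: "card ?D > 0" using neD by blast
    have "avg_degree \<A> = 2 * real (card (cube_edges \<A>)) / real (card \<A>)" by (simp add: avg_degree_def)
    also have "\<dots> \<le> 2 * real (card (cube_edges \<A>)) / real (card ?D)"
      using p cardD by (intro divide_left_mono) auto
    also have "\<dots> \<le> 2 * real (card (cube_edges ?D)) / real (card ?D)"
      using p cardE by (intro divide_right_mono) auto
    finally show ?thesis by (simp add: avg_degree_def)
  qed
  show ?thesis using avg assms(3) dist by linarith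
qed

end
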